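(* Let $H_A$ be a Hermitian operator on $\mathcal H_A$ (dimension $d_A$), fix an orthonormal basis $\{|j\rangle_A\}_{j=1}^{d_A}$ and an integer $1\le d_{A'}\le d_A$, and write in block form $$H_A=\begin{pmatrix} J_\parallel & C^\dagger\\ C & J_\perp\end{pmatrix},$$ where $J_\parallel$ is the compression of $H_A$ to the span $\mathcal H_{A\parallel}$ of $|1\rangle_A,\dots,|d_{A'}\rangle_A$ and $J_\perp$ its compression to the orthogonal complement. Let $H_B$ be any Hermitian operator on $\mathcal H_B$. Then $H=H_A\otimes H_B$ can simulate $H'=J_\parallel\otimes H_B$ (acting on a $d_{A'}$-dimensional system $A'$ held by Alice, and on $B$) with simulation rate $\gamma_{H'|H}\ge 1$.
   Context: All Hamiltonians are Hermitian operators on finite-dimensional Hilbert spaces. A bipartite Hamiltonian acts on $\mathcal H_A\otimes\mathcal H_B$, with system $A$ held by Alice and $B$ by Bob; it is local if it has the form $H_A\otimes I_B+I_A\otimes H_B$ and nonlocal otherwise. Simulation model: given a bipartite Hamiltonian $H$, Alice and Bob may attach or discard local ancillary systems of arbitrary finite dimension (on which $H$ acts trivially), apply arbitrary instantaneous local unitaries $U_A\otimes U_B$ (each acting on that party's system together with their ancillas), and switch $H$ on for chosen time intervals; the goal is to track (stroboscopically, for arbitrarily finely spaced times) the evolution $e^{-iH't}$ of a target bipartite Hamiltonian $H'$. The simulation rate $\gamma_{H'|H}$ is the supremum of $\gamma\ge 0$ such that evolution under $H'$ for any time $t$ can be achieved in this way (in the limit of arbitrarily fine time slicing) using $H$ for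 total time $t/\gamma$. The elementary allowed simulations are: rescaling ($cH$, $c>0$, is obtained from $H$ at rate $1/c$ and conversely); appending ancillas ($H$ and $H\otimes I_{A'B'}$ simulate each other at rate 1); adding local Hamiltonians at no cost; conjugation by local unitaries ($H$ and $UHU^\dagger$, $U=U_A\otimes U_B$, simulate each other at rate 1); and time sharing (using $H_1$ a fraction $p$ of the time and $H_2$ a fraction $1-p$ yields $pH_1+(1-p)H_2$ at rate $\ge 1$, by the Lie–Trotter formula), and compositions of these. *)

theory Defs
  imports Complex_Main "HOL-Library.Extended_Real" "Jordan_Normal_Form.Matrix"
begin

text \<open>Finite-dimensional operators are complex matrices in the fixed standard
(orthonormal) basis. Bipartite systems A (dim dA) and B (dim dB) are encoded by the
Kronecker product with index a*dB + b.\<close>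

definition adj :: "complex mat \<Rightarrow> complex mat" where
  "adj M = mat (dim_col M) (dim_row M) (\<lambda>(i,j). cnj (M $$ (j,i)))"

definition hermitian_op :: "nat \<Rightarrow> complex mat \<Rightarrow> bool" where
  "hermitian_op n M \<longleftrightarrow> M \<in> carrier_mat n n \<and> adj M = M"

definition unitary_op :: "nat \<Rightarrow> complex mat \<Rightarrow> bool" where
  "unitary_op n U \<longleftrightarrow> U \<in> carrier_mat n n \<and> adj U * U = 1\<^sub>m n \<and> U * adj U = 1\<^sub>m n"

definition isometry_op :: "nat \<Rightarrow> nat \<Rightarrow> complex mat \<Rightarrow> bool" where
  "isometry_op m n V \<longleftrightarrow> V \<in> carrier_mat m n \<and> adj V * V = 1\<^sub>m n"

definition kron :: "complex mat \<Rightarrow> complex mat \<Rightarrow> complex mat" where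
  "kron A B = mat (dim_row A * dim_row B) (dim_col A * dim_col B)
     (\<lambda>(i,j). A $$ (i div dim_row B, j div dim_col B) * B $$ (i mod dim_row B, j mod dim_col B))"

definition mexp :: "complex mat \<Rightarrow> complex mat" where
  "mexp M = mat (dim_row M) (dim_col M) (\<lambda>(i,j). (\<Sum>k. (M ^\<^sub>m k) $$ (i,j) / of_nat (fact k)))"

definition evol :: "complex mat \<Rightarrow> real \<Rightarrow> complex mat" where
  "evol H t = mexp ((- \<i> * of_real t) \<cdot>\<^sub>m H)"

definition mnorm :: "complex mat \<Rightarrow> real" where
  "mnorm M = sqrt (\<Sum>i<dim_row M. \<Sum>j<dim_col M. (cmod (M $$ (i,j)))\<^sup>2)"

definition compress :: "nat \<Rightarrow> complex mat \<Rightarrow> complex mat" where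
  "compress k M = mat k k (\<lambda>(i,j). M $$ (i,j))"

text \<open>Extension of a bipartite H on A (x) B (dims dA, dB) to the laboratory space
(A (x) R_A) (x) (B (x) R_B), acting trivially on the ancillas R_A (dim rA), R_B (dim rB).
A lab index is ((a*rA + ra)*(dB*rB) + (b*rB + rb)).\<close>
definition ext_ham :: "nat \<Rightarrow> nat \<Rightarrow> nat \<Rightarrow> nat \<Rightarrow> complex mat \<Rightarrow> complex mat" where
  "ext_ham dA dB rA rB H = mat (dA*rA*(dB*rB)) (dA*rA*(dB*rB)) (\<lambda>(i,j).
     let a = i div (rA*(dB*rB)); ra = (i div (dB*rB)) mod rA;
         b = (i mod (dB*rB)) div rB; rb = i mod rB;
         a' = j div (rA*(dB*rB)); ra' = (j div (dB*rB)) mod rA;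
         b' = (j mod (dB*rB)) div rB; rb' = j mod rB
     in if ra = ra' \<and> rb = rb' then H $$ (a*dB + b, a'*dB + b') else 0)"

fun protocol_unitary :: "complex mat \<Rightarrow> nat \<Rightarrow> (real \<times> complex mat \<times> complex mat) list \<Rightarrow> complex mat" where
  "protocol_unitary Hx N [] = 1\<^sub>m N"
| "protocol_unitary Hx N ((tau, UA, UB) # ps) =
     kron UA UB * evol Hx tau * protocol_unitary Hx N ps"

text \<open>gamma is an achievable rate for simulating H' (on A' (x) B', dims dA', dB') with
H (on A (x) B, dims dA, dB): for every target time T and accuracy eps, Alice and Bob
attach ancillas (encoding isometries V_A, V_B, i.e. ancillas in fixed states followed by a
local unitary), alternate evolution under H with local unitaries, using H for total time at
most T/gamma, and reproduce e^{-iH'T} on the encoded system up to eps.\<close>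
definition achievable_rate ::
  "nat \<Rightarrow> nat \<Rightarrow> complex mat \<Rightarrow> nat \<Rightarrow> nat \<Rightarrow> complex mat \<Rightarrow> real \<Rightarrow> bool" where
  "achievable_rate dA dB H dA' dB' H' \<gamma> \<longleftrightarrow>
     (\<forall>T > 0. \<forall>\<epsilon> > 0. \<exists>rA rB VA VB ps.
        rA > 0 \<and> rB > 0 \<and>
        isometry_op (dA*rA) dA' VA \<and> isometry_op (dB*rB) dB' VB \<and>
        (\<forall>(tau, UA, UB) \<in> set ps. tau \<ge> 0 \<and> unitary_op (dA*rA) UA \<and> unitary_op (dB*rB) UB) \<and>
        \<gamma> * sum_list (map fst ps) \<le> T \<and>
        mnorm (protocol_unitary (ext_ham dA dB rA rB H) (dA*rA*(dB*rB)) ps * kron VA VB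
               - kron VA VB * evol H' T) \<le> \<epsilon>)"

definition sim_rate ::
  "nat \<Rightarrow> nat \<Rightarrow> complex mat \<Rightarrow> nat \<Rightarrow> nat \<Rightarrow> complex mat \<Rightarrow> ereal" where
  "sim_rate dA dB H dA' dB' H' = Sup {ereal \<gamma> | \<gamma>. \<gamma> \<ge> 0 \<and> achievable_rate dA dB H dA' dB' H' \<gamma>}"

end

theory Submission imports Defs begin

definition rowsum :: "complex mat \<Rightarrow> nat \<Rightarrow> real" where
  "rowsum M i = (\<Sum>j<dim_col M. cmod (M $$ (i,j)))"
definition rs :: "complex mat \<Rightarrow> real" where
  "rs M = Max (insert 0 (rowsum M ` {..<dim_row M}))"

lemma rs_nonneg: "0 \<le> rs M"
  unfolding rs_def by (rule Max_ge) auto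

lemma rowsum_le_rs: "i < dim_row M \<Longrightarrow> rowsum M i \<le> rs M"
  unfolding rs_def by (rule Max_ge) auto

lemma rs_leI: "0 \<le> c \<Longrightarrow> (\<And>i. i < dim_row M \<Longrightarrow> rowsum M i \<le> c) \<Longrightarrow> rs M \<le> c"
  unfolding rs_def by (subst Max_le_iff) auto

lemma entry_le_rs: assumes "i < dim_row M" "j < dim_col M" shows "cmod (M $$ (i,j)) \<le> rs M"
proof -
  have "cmod (M $$ (i,j)) \<le> rowsum M i" unfolding rowsum_def
    using assms(2) by (intro member_le_sum[where f="\<lambda>j. cmod (M $$ (i,j))"]) auto
  also have "\<dots> \<le> rs M" using assms(1) by (rule rowsum_le_rs)
  finally show ?thesis .
qed

lemma mult_entry: "i < dim_row A \<Longrightarrow> j < dim_col B \<Longrightarrow> dim_col A = dim_row B \<Longrightarrow>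
  (A * B) $$ (i,j) = (\<Sum>l<dim_col A. A $$ (i,l) * B $$ (l,j))"
  by (simp add: scalar_prod_def lessThan_atLeast0)

lemma rs_mult: assumes d: "dim_col A = dim_row B" shows "rs (A * B) \<le> rs A * rs B"
proof (rule rs_leI)
  show "0 \<le> rs A * rs B" by (simp add: rs_nonneg)
  fix i assume i: "i < dim_row (A * B)"
  hence i': "i < dim_row A" by simp
  have "rowsum (A * B) i = (\<Sum>j<dim_col B. cmod (\<Sum>l<dim_col A. A $$ (i,l) * B $$ (l,j)))"
    unfolding rowsum_def using i' d by (simp add: scalar_prod_def lessThan_atLeast0)
  also have "\<dots> \<le> (\<Sum>j<dim_col B. \<Sum>l<dim_col A. cmod (A $$ (i,l)) * cmod (B $$ (l,j)))"
    by (intro sum_mono order.trans[OF norm_sum]) (simp add: norm_mult)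
  also have "\<dots> = (\<Sum>l<dim_col A. cmod (A $$ (i,l)) * rowsum B l)"
    unfolding rowsum_def by (subst sum.swap) (simp add: sum_distrib_left)
  also have "\<dots> \<le> (\<Sum>l<dim_col A. cmod (A $$ (i,l)) * rs B)"
    using d by (intro sum_mono mult_left_mono rowsum_le_rs) auto
  also have "\<dots> = rowsum A i * rs B" unfolding rowsum_def by (simp add: sum_distrib_right)
  also have "\<dots> \<le> rs A * rs B" using i' by (intro mult_right_mono rowsum_le_rs rs_nonneg)
  finally show "rowsum (A * B) i \<le> rs A * rs B" .
qed

lemma rs_add: assumes "dim_row A = dim_row B" "dim_col A = dim_col B" shows "rs (A + B) \<le> rs A + rs B"
proof (rule rs_leI)
  show "0 \<le> rs A + rs B" by (simp add: rs_nonneg add_nonneg_nonneg)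
  fix i assume i: "i < dim_row (A + B)"
  have "rowsum (A + B) i \<le> rowsum A i + rowsum B i"
    unfolding rowsum_def using i assms by (simp add: sum.distrib[symmetric] norm_triangle_ineq sum_mono)
  also have "\<dots> \<le> rs A + rs B" using i assms by (intro add_mono rowsum_le_rs) auto
  finally show "rowsum (A + B) i \<le> rs A + rs B" .
qed

lemma rs_minus: assumes "dim_row A = dim_row B" "dim_col A = dim_col B" shows "rs (A - B) \<le> rs A + rs B"
proof (rule rs_leI)
  show "0 \<le> rs A + rs B" by (simp add: rs_nonneg add_nonneg_nonneg)
  fix i assume i: "i < dim_row (A - B)"
  have "rowsum (A - B) i \<le> rowsum A i + rowsum B i"
    unfolding rowsum_def using i assms by (simp add: sum.distrib[symmetric] norm_triangle_ineq4 sum_mono)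
  also have "\<dots> \<le> rs A + rs B" using i assms by (intro add_mono rowsum_le_rs) auto
  finally show "rowsum (A - B) i \<le> rs A + rs B" .
qed

lemma rs_smult: "rs (c \<cdot>\<^sub>m A) = cmod c * rs A"
proof (rule antisym)
  show "rs (c \<cdot>\<^sub>m A) \<le> cmod c * rs A"
  proof (rule rs_leI)
    show "0 \<le> cmod c * rs A" by (simp add: rs_nonneg)
    fix i assume i: "i < dim_row (c \<cdot>\<^sub>m A)"
    have "rowsum (c \<cdot>\<^sub>m A) i = cmod c * rowsum A i"
      unfolding rowsum_def using i by (simp add: norm_mult sum_distrib_left)
    also have "\<dots> \<le> cmod c * rs A" using i by (intro mult_left_mono rowsum_le_rs) auto
    finally show "rowsum (c \<cdot>\<^sub>m A) i \<le> cmod c * rs A" .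
  qed
  show "cmod c * rs A \<le> rs (c \<cdot>\<^sub>m A)"
  proof (cases "c = 0")
    case True then show ?thesis by (simp add: rs_nonneg)
  next
    case False
    have "rs A \<le> rs (c \<cdot>\<^sub>m A) / cmod c"
    proof (rule rs_leI)
      show "0 \<le> rs (c \<cdot>\<^sub>m A) / cmod c" by (simp add: rs_nonneg)
      fix i assume i: "i < dim_row A"
      have "rowsum (c \<cdot>\<^sub>m A) i = cmod c * rowsum A i"
        unfolding rowsum_def using i by (simp add: norm_mult sum_distrib_left)
      moreover have "rowsum (c \<cdot>\<^sub>m A) i \<le> rs (c \<cdot>\<^sub>m A)" using i by (intro rowsum_le_rs) auto
      ultimately show "rowsum A i \<le> rs (c \<cdot>\<^sub>m A) / cmod c" using False
        by (simp add: field_simps)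
    qed
    thus ?thesis using False by (simp add: field_simps)
  qed
qed

lemma rs_one: "rs (1\<^sub>m n) \<le> 1"
proof (rule rs_leI)
  fix i assume i: "i < dim_row (1\<^sub>m n)"
  have "rowsum (1\<^sub>m n) i = (\<Sum>j<n. if i = j then 1 else 0)"
    unfolding rowsum_def using i by (intro sum.cong) auto
  also have "\<dots> = 1" using i by simp
  finally show "rowsum (1\<^sub>m n) i \<le> 1" by simp
qed simp

lemma rs_pow: assumes "A \<in> carrier_mat n n" shows "rs (A ^\<^sub>m k) \<le> rs A ^ k"
proof (induction k)
  case 0 then show ?case using rs_one by simp
next
  case (Suc k)
  have "rs (A ^\<^sub>m Suc k) \<le> rs (A ^\<^sub>m k) * rs A" using assms by (simp add: rs_mult)
  also have "\<dots> \<le> rs A ^ k * rs A" by (intro mult_right_mono Suc rs_nonneg)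
  finally show ?case by (simp add: mult.commute)
qed

lemma pow_entry_le: assumes "M \<in> carrier_mat n n" "i < n" "j < n"
  shows "cmod ((M ^\<^sub>m k) $$ (i,j)) \<le> rs M ^ k"
proof -
  have "cmod ((M ^\<^sub>m k) $$ (i,j)) \<le> rs (M ^\<^sub>m k)" by (rule entry_le_rs) (use assms in auto)
  then show ?thesis using rs_pow[OF assms(1), of k] by linarith
qed

lemma series_entry_summable:
  assumes M: "M \<in> carrier_mat n n" and c: "\<And>k. 0 \<le> c k" and sm: "summable (\<lambda>k. c k * rs M ^ k)"
    and ij: "i < n" "j < n"
  shows "summable (\<lambda>k. norm (of_real (c k) * (M ^\<^sub>m k) $$ (i,j)))"
proof (rule summable_comparison_test[OF _ sm], intro exI[of _ 0] allI impI)
  fix k show "norm (norm (of_real (c k) * (M ^\<^sub>m k) $$ (i,j))) \<le> c k * rs M ^ k"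
    using pow_entry_le[OF M ij, of k] c[of k] by (simp add: norm_mult mult_left_mono)
qed

lemma rs_series:
  assumes M: "M \<in> carrier_mat n n" and c: "\<And>k. 0 \<le> c k" and sm: "summable (\<lambda>k. c k * rs M ^ k)"
    and X: "X \<in> carrier_mat n n"
    and ent: "\<And>i j. i < n \<Longrightarrow> j < n \<Longrightarrow> X $$ (i,j) = (\<Sum>k. of_real (c k) * (M ^\<^sub>m k) $$ (i,j))"
  shows "rs X \<le> (\<Sum>k. c k * rs M ^ k)"
proof (rule rs_leI)
  show "0 \<le> (\<Sum>k. c k * rs M ^ k)" using sm c by (intro suminf_nonneg) (auto simp: rs_nonneg)
  fix i assume i: "i < dim_row X"
  hence i': "i < n" using X by simp
  let ?f = "\<lambda>j k. norm (of_real (c k) * (M ^\<^sub>m k) $$ (i,j))"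
  have smj: "summable (?f j)" if "j < n" for j using series_entry_summable[OF M c sm i' that] .
  have "rowsum X i = (\<Sum>j<n. cmod (\<Sum>k. of_real (c k) * (M ^\<^sub>m k) $$ (i,j)))"
    unfolding rowsum_def using X i' by (intro sum.cong) (auto simp: ent)
  also have "\<dots> \<le> (\<Sum>j<n. \<Sum>k. ?f j k)"
    using smj by (intro sum_mono summable_norm) auto
  also have "\<dots> = (\<Sum>k. \<Sum>j<n. ?f j k)" using smj by (intro suminf_sum[symmetric]) auto
  also have "\<dots> \<le> (\<Sum>k. c k * rs M ^ k)"
  proof (rule suminf_le)
    show "summable (\<lambda>k. \<Sum>j<n. ?f j k)" using smj by (intro summable_sum) auto
    show "summable (\<lambda>k. c k * rs M ^ k)" by (rule sm)
    fix k
    have "(\<Sum>j<n. ?f j k) = c k * rowsum (M ^\<^sub>m k) i"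
      unfolding rowsum_def using M c[of k] by (simp add: norm_mult sum_distrib_left)
    also have "\<dots> \<le> c k * rs (M ^\<^sub>m k)" using M i' c[of k] by (intro mult_left_mono rowsum_le_rs) auto
    also have "\<dots> \<le> c k * rs M ^ k" using c[of k] rs_pow[OF M] by (intro mult_left_mono) auto
    finally show "(\<Sum>j<n. ?f j k) \<le> c k * rs M ^ k" .
  qed
  finally show "rowsum X i \<le> (\<Sum>k. c k * rs M ^ k)" .
qed

lemma series_entry_sums:
  assumes M: "M \<in> carrier_mat n n" and c: "\<And>k. 0 \<le> c k" and sm: "summable (\<lambda>k. c k * rs M ^ k)"
    and ij: "i < n" "j < n"
  shows "summable (\<lambda>k. of_real (c k) * (M ^\<^sub>m k) $$ (i,j))"
  using series_entry_summable[OF assms] by (rule summable_norm_cancel)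

lemma exp_sums: "(\<lambda>k. (1 / fact k) * r ^ k) sums exp (r::real)"
  using exp_converges[of r] by (simp add: divide_inverse mult.commute)

lemma mexp_entry: "M \<in> carrier_mat n n \<Longrightarrow> i < n \<Longrightarrow> j < n \<Longrightarrow>
  mexp M $$ (i,j) = (\<Sum>k. of_real (1 / fact k) * (M ^\<^sub>m k) $$ (i,j))"
  unfolding mexp_def by (simp add: divide_inverse mult.commute)

lemma mexp_carrier[simp]: "M \<in> carrier_mat n n \<Longrightarrow> mexp M \<in> carrier_mat n n"
  unfolding mexp_def by simp

lemma mexp_entry_sums: assumes M: "M \<in> carrier_mat n n" "i < n" "j < n"
  shows "(\<lambda>k. of_real (1 / fact k) * (M ^\<^sub>m k) $$ (i,j)) sums (mexp M $$ (i,j))"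
proof -
  have "summable (\<lambda>k. of_real (1 / fact k) * (M ^\<^sub>m k) $$ (i,j))"
    using exp_sums[of "rs M"] by (intro series_entry_sums[OF M(1) _ _ M(2,3)]) (auto simp: sums_summable)
  thus ?thesis using mexp_entry[OF M] by (simp add: summable_sums)
qed

lemma rs_mexp: assumes M: "M \<in> carrier_mat n n" shows "rs (mexp M) \<le> exp (rs M)"
proof -
  have "rs (mexp M) \<le> (\<Sum>k. (1 / fact k) * rs M ^ k)"
    using exp_sums[of "rs M"] M
    by (intro rs_series[OF M]) (auto simp: sums_summable mexp_entry)
  thus ?thesis using exp_sums[of "rs M"] by (simp add: sums_iff)
qed

lemma rs_mexp1: assumes M: "M \<in> carrier_mat n n" shows "rs (mexp M - 1\<^sub>m n) \<le> exp (rs M) - 1"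
proof -
  define c where "c k = (if k = 0 then 0 else 1 / fact k :: real)" for k
  have cs: "(\<lambda>k. c k * r ^ k) sums (exp r - 1)" for r :: real
  proof -
    have "(\<lambda>k. (1 / fact k) * r ^ k - (if k = 0 then 1 else 0)) sums (exp r - 1)"
      by (intro sums_diff exp_sums) (use sums_single[of 0 "\<lambda>_. 1::real"] in simp)
    moreover have "(\<lambda>k. (1 / fact k) * r ^ k - (if k = 0 then 1 else 0)) = (\<lambda>k. c k * r ^ k)"
      by (auto simp: c_def)
    ultimately show ?thesis by simp
  qed
  have "rs (mexp M - 1\<^sub>m n) \<le> (\<Sum>k. c k * rs M ^ k)"
  proof (rule rs_series[OF M])
    show "summable (\<lambda>k. c k * rs M ^ k)" using cs sums_summable by blast
    fix i j assume ij: "i < n" "j < n"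
    have "(\<lambda>k. of_real (1 / fact k) * (M ^\<^sub>m k) $$ (i,j) - (if k = 0 then (M ^\<^sub>m k) $$ (i,j) else 0))
      sums (mexp M $$ (i,j) - (M ^\<^sub>m 0) $$ (i,j))"
      by (intro sums_diff mexp_entry_sums[OF M ij]) (use sums_single[of 0 "\<lambda>k. (M ^\<^sub>m k) $$ (i,j)"] in simp)
    moreover have "(\<lambda>k. of_real (1 / fact k) * (M ^\<^sub>m k) $$ (i,j) - (if k = 0 then (M ^\<^sub>m k) $$ (i,j) else 0))
       = (\<lambda>k. of_real (c k) * (M ^\<^sub>m k) $$ (i,j))" by (auto simp: c_def)
    ultimately show "(mexp M - 1\<^sub>m n) $$ (i,j) = (\<Sum>k. of_real (c k) * (M ^\<^sub>m k) $$ (i,j))"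
      using ij M by (simp add: sums_iff)
  qed (use M in \<open>auto simp: c_def\<close>)
  thus ?thesis using cs[of "rs M"] by (simp add: sums_iff)
qed

lemma rs_mexp2: assumes M: "M \<in> carrier_mat n n" shows "rs (mexp M - 1\<^sub>m n - M) \<le> exp (rs M) - 1 - rs M"
proof -
  define c where "c k = (if k < 2 then 0 else 1 / fact k :: real)" for k
  have cs: "(\<lambda>k. c k * r ^ k) sums (exp r - 1 - r)" for r :: real
  proof -
    have "(\<lambda>k. (1 / fact k) * r ^ k - (if k = 0 then 1 else 0) - (if k = 1 then r else 0)) sums (exp r - 1 - r)"
      by (intro sums_diff exp_sums) (use sums_single[of 0 "\<lambda>_. 1::real"] sums_single[of 1 "\<lambda>_. r::real"] in simp_all)
    moreover have "(\<lambda>k. (1 / fact k) * r ^ k - (if k = 0 then 1 else 0) - (if k = 1 then r else 0)) = (\<lambda>k. c k * r ^ k)"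
      unfolding fun_eq_iff c_def by (auto simp: not_less less_2_cases_iff)
    ultimately show ?thesis by simp
  qed
  have "rs (mexp M - 1\<^sub>m n - M) \<le> (\<Sum>k. c k * rs M ^ k)"
  proof (rule rs_series[OF M])
    show "summable (\<lambda>k. c k * rs M ^ k)" using cs sums_summable by blast
    fix i j assume ij: "i < n" "j < n"
    have "(\<lambda>k. of_real (1 / fact k) * (M ^\<^sub>m k) $$ (i,j) - (if k = 0 then (M ^\<^sub>m k) $$ (i,j) else 0)
             - (if k = 1 then (M ^\<^sub>m k) $$ (i,j) else 0))
      sums (mexp M $$ (i,j) - (M ^\<^sub>m 0) $$ (i,j) - (M ^\<^sub>m 1) $$ (i,j))"
      by (intro sums_diff mexp_entry_sums[OF M ij])
        (use sums_single[of 0 "\<lambda>k. (M ^\<^sub>m k) $$ (i,j)"] sums_single[of 1 "\<lambda>k. (M ^\<^sub>m k) $$ (i,j)"] in simp_all)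
    moreover have "(\<lambda>k. of_real (1 / fact k) * (M ^\<^sub>m k) $$ (i,j) - (if k = 0 then (M ^\<^sub>m k) $$ (i,j) else 0)
             - (if k = 1 then (M ^\<^sub>m k) $$ (i,j) else 0))
       = (\<lambda>k. of_real (c k) * (M ^\<^sub>m k) $$ (i,j))" unfolding fun_eq_iff c_def by (auto simp: not_less less_2_cases_iff)
    moreover have "(M ^\<^sub>m 1) $$ (i,j) = M $$ (i,j)" using M ij by (simp add: scalar_prod_def)
    ultimately show "(mexp M - 1\<^sub>m n - M) $$ (i,j) = (\<Sum>k. of_real (c k) * (M ^\<^sub>m k) $$ (i,j))"
      using ij M by (simp add: sums_iff)
  qed (use M in \<open>auto simp: c_def\<close>)
  thus ?thesis using cs[of "rs M"] by (simp add: sums_iff)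
qed

lemma pascal_sum:
  fixes g :: "nat \<Rightarrow> complex"
  shows "(\<Sum>k\<le>Suc m. of_nat (Suc m choose k) * g k)
       = (\<Sum>k\<le>m. of_nat (m choose k) * g k) + (\<Sum>k\<le>m. of_nat (m choose k) * g (Suc k))"
proof -
  have "(\<Sum>k\<le>Suc m. of_nat (Suc m choose k) * g k)
      = g 0 + (\<Sum>k\<le>m. of_nat (Suc m choose Suc k) * g (Suc k))"
    by (subst sum.atMost_Suc_shift) simp
  also have "\<dots> = g 0 + (\<Sum>k\<le>m. of_nat (m choose Suc k) * g (Suc k))
                    + (\<Sum>k\<le>m. of_nat (m choose k) * g (Suc k))"
    by (simp add: sum.distrib algebra_simps)
  also have "g 0 + (\<Sum>k\<le>m. of_nat (m choose Suc k) * g (Suc k)) = (\<Sum>k\<le>Suc m. of_nat (m choose k) * g k)"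
    by (subst sum.atMost_Suc_shift) simp
  also have "\<dots> = (\<Sum>k\<le>m. of_nat (m choose k) * g k)" by simp
  finally show ?thesis .
qed

lemma binom_entry:
  fixes A :: "complex mat"
  assumes A: "A \<in> carrier_mat n n" and ij: "i < n" "j < n"
  shows "((1\<^sub>m n + c \<cdot>\<^sub>m A) ^\<^sub>m m) $$ (i,j) = (\<Sum>k\<le>m. of_nat (m choose k) * (c ^ k * (A ^\<^sub>m k) $$ (i,j)))"
  using ij
proof (induction m arbitrary: i j)
  case 0 then show ?case using A by simp
next
  case (Suc m)
  let ?B = "(1\<^sub>m n + c \<cdot>\<^sub>m A) ^\<^sub>m m"
  have Bc: "?B \<in> carrier_mat n n" using A by (intro pow_carrier_mat) auto
  have "((1\<^sub>m n + c \<cdot>\<^sub>m A) ^\<^sub>m Suc m) $$ (i,j) = (\<Sum>l<n. ?B $$ (i,l) * ((if l = j then 1 else 0) + c * A $$ (l,j)))"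
    using Suc.prems A Bc by (auto simp: scalar_prod_def lessThan_atLeast0 intro!: sum.cong)
  also have "\<dots> = (\<Sum>l<n. ?B $$ (i,l) * (if l = j then 1 else 0)) + c * (\<Sum>l<n. ?B $$ (i,l) * A $$ (l,j))"
    by (simp add: distrib_left sum.distrib sum_distrib_left ac_simps)
  also have "(\<Sum>l<n. ?B $$ (i,l) * (if l = j then 1 else 0)) = ?B $$ (i,j)"
    using Suc.prems by (simp add: if_distrib cong: if_cong)
  also have "(\<Sum>l<n. ?B $$ (i,l) * A $$ (l,j)) = (\<Sum>l<n. \<Sum>k\<le>m. of_nat (m choose k) * c ^ k * ((A ^\<^sub>m k) $$ (i,l) * A $$ (l,j)))"
    using Suc.prems by (intro sum.cong refl) (simp add: Suc.IH sum_distrib_right sum_distrib_left algebra_simps)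
  also have "\<dots> = (\<Sum>k\<le>m. of_nat (m choose k) * c ^ k * (A ^\<^sub>m Suc k) $$ (i,j))"
    using Suc.prems A by (subst sum.swap) (auto simp: scalar_prod_def lessThan_atLeast0 sum_distrib_left intro!: sum.cong)
  also have "?B $$ (i,j) + c * (\<Sum>k\<le>m. of_nat (m choose k) * c ^ k * (A ^\<^sub>m Suc k) $$ (i,j))
     = (\<Sum>k\<le>Suc m. of_nat (Suc m choose k) * (c ^ k * (A ^\<^sub>m k) $$ (i,j)))"
    unfolding pascal_sum[of m "\<lambda>k. c ^ k * (A ^\<^sub>m k) $$ (i,j)"] using Suc.prems
    by (simp only: Suc.IH sum_distrib_left) (simp add: algebra_simps)
  finally show ?case .
qed

lemma rs_mexp_binom:
  assumes A: "A \<in> carrier_mat n n" and m: "m > 0"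
  shows "rs (mexp A - (1\<^sub>m n + of_real (1 / real m) \<cdot>\<^sub>m A) ^\<^sub>m m) \<le> exp (rs A) - (1 + rs A / real m) ^ m"
proof -
  define c where "c k = 1 / fact k - real (m choose k) / real m ^ k" for k
  have c0: "0 \<le> c k" for k
  proof -
    have "real (m choose k) * fact k \<le> real m ^ k"
      using binomial_fact_pow[of m k] by (metis of_nat_fact of_nat_le_iff of_nat_mult of_nat_power)
    hence "real (m choose k) / real m ^ k \<le> 1 / fact k" using m
      by (simp add: field_simps)
    thus ?thesis by (simp add: c_def)
  qed
  have fin: "(\<lambda>k. real (m choose k) / real m ^ k * r ^ k) sums (1 + r / real m) ^ m" for r :: real
  proof -
    have "(\<lambda>k. real (m choose k) / real m ^ k * r ^ k) sums (\<Sum>k\<le>m. real (m choose k) / real m ^ k * r ^ k)"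
      by (rule sums_finite) auto
    moreover have "(\<Sum>k\<le>m. real (m choose k) / real m ^ k * r ^ k) = (r / real m + 1) ^ m"
      by (subst binomial_ring) (simp add: power_divide)
    ultimately show ?thesis by (simp add: add.commute)
  qed
  have cs: "(\<lambda>k. c k * r ^ k) sums (exp r - (1 + r / real m) ^ m)" for r :: real
    using sums_diff[OF exp_sums fin] by (simp add: c_def algebra_simps)
  have "rs (mexp A - (1\<^sub>m n + of_real (1 / real m) \<cdot>\<^sub>m A) ^\<^sub>m m) \<le> (\<Sum>k. c k * rs A ^ k)"
  proof (rule rs_series[OF A c0])
    show "summable (\<lambda>k. c k * rs A ^ k)" using cs sums_summable by blast
    fix i j assume ij: "i < n" "j < n"
    have "(\<lambda>k. of_real (real (m choose k) / real m ^ k) * (A ^\<^sub>m k) $$ (i,j)) sums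
        (\<Sum>k\<le>m. of_real (real (m choose k) / real m ^ k) * (A ^\<^sub>m k) $$ (i,j))"
      by (rule sums_finite) auto
    also have "(\<Sum>k\<le>m. of_real (real (m choose k) / real m ^ k) * (A ^\<^sub>m k) $$ (i,j))
       = ((1\<^sub>m n + of_real (1 / real m) \<cdot>\<^sub>m A) ^\<^sub>m m) $$ (i,j)"
      unfolding binom_entry[OF A ij] by (intro sum.cong refl) (simp add: power_divide)
    finally have "(\<lambda>k. of_real (1 / fact k) * (A ^\<^sub>m k) $$ (i,j) - of_real (real (m choose k) / real m ^ k) * (A ^\<^sub>m k) $$ (i,j))
       sums (mexp A $$ (i,j) - ((1\<^sub>m n + of_real (1 / real m) \<cdot>\<^sub>m A) ^\<^sub>m m) $$ (i,j))"
      by (intro sums_diff mexp_entry_sums[OF A ij])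
    moreover have "(\<lambda>k. of_real (1 / fact k) * (A ^\<^sub>m k) $$ (i,j) - of_real (real (m choose k) / real m ^ k) * (A ^\<^sub>m k) $$ (i,j))
       = (\<lambda>k. of_real (c k) * (A ^\<^sub>m k) $$ (i,j))"
      unfolding c_def fun_eq_iff by (simp add: algebra_simps)
    ultimately show "(mexp A - (1\<^sub>m n + of_real (1 / real m) \<cdot>\<^sub>m A) ^\<^sub>m m) $$ (i,j) = (\<Sum>k. of_real (c k) * (A ^\<^sub>m k) $$ (i,j))"
      using ij A by (simp add: sums_iff)
  qed (use A in auto)
  thus ?thesis using cs[of "rs A"] by (simp add: sums_iff)
qed

lemma tele:
  assumes Y: "Y \<in> carrier_mat N N" and Z: "Z \<in> carrier_mat N N"
    and K: "rs Y \<le> K" "rs Z \<le> K" "1 \<le> K"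
  shows "rs (Y ^\<^sub>m m - Z ^\<^sub>m m) \<le> real m * K ^ m * rs (Y - Z)"
proof (induction m)
  case 0 then show ?case using Y Z by (simp add: rs_def rowsum_def)
next
  case (Suc m)
  have Ym: "Y ^\<^sub>m m \<in> carrier_mat N N" and Zm: "Z ^\<^sub>m m \<in> carrier_mat N N" using Y Z by auto
  have eq: "Y ^\<^sub>m Suc m - Z ^\<^sub>m Suc m = Y ^\<^sub>m m * (Y - Z) + (Y ^\<^sub>m m - Z ^\<^sub>m m) * Z"
  proof -
    have "Y ^\<^sub>m m * (Y - Z) = Y ^\<^sub>m m * Y - Y ^\<^sub>m m * Z" using Ym Y Z by (rule mult_minus_distrib_mat)
    moreover have "(Y ^\<^sub>m m - Z ^\<^sub>m m) * Z = Y ^\<^sub>m m * Z - Z ^\<^sub>m m * Z" using Ym Zm Z by (rule minus_mult_distrib_mat)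
    ultimately show ?thesis using Ym Zm Y Z by (intro eq_matI) auto
  qed
  have KK: "0 \<le> K" using K by simp
  have d: "0 \<le> rs (Y - Z)" by (rule rs_nonneg)
  have "rs (Y ^\<^sub>m Suc m - Z ^\<^sub>m Suc m) \<le> rs (Y ^\<^sub>m m * (Y - Z)) + rs ((Y ^\<^sub>m m - Z ^\<^sub>m m) * Z)"
    unfolding eq using Ym Zm Y Z by (intro rs_add) auto
  also have "\<dots> \<le> rs (Y ^\<^sub>m m) * rs (Y - Z) + rs (Y ^\<^sub>m m - Z ^\<^sub>m m) * rs Z"
    using Ym Zm Y Z by (intro add_mono rs_mult) auto
  also have "\<dots> \<le> K ^ m * rs (Y - Z) + (real m * K ^ m * rs (Y - Z)) * K"
  proof (intro add_mono mult_right_mono mult_mono Suc.IH)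
    show "rs (Y ^\<^sub>m m) \<le> K ^ m" using rs_pow[OF Y, of m] K(1) power_mono[OF K(1) rs_nonneg, of m] by linarith
  qed (use K KK d rs_nonneg in auto)
  also have "\<dots> \<le> K ^ Suc m * rs (Y - Z) + (real m * K ^ m * rs (Y - Z)) * K"
    using K d by (intro add_mono mult_right_mono) (auto simp: power_increasing)
  also have "\<dots> = real (Suc m) * K ^ Suc m * rs (Y - Z)" by (simp add: algebra_simps)
  finally show ?case .
qed

lemma prod_ident:
  fixes P Q a b :: "complex mat"
  assumes c: "P \<in> carrier_mat N N" "Q \<in> carrier_mat N N" "a \<in> carrier_mat N N" "b \<in> carrier_mat N N"
  shows "rs (P * Q - (1\<^sub>m N + (a + b))) \<le> rs (P - 1\<^sub>m N) * rs (Q - 1\<^sub>m N) + rs (P - 1\<^sub>m N - a) + rs (Q - 1\<^sub>m N - b)"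
proof -
  have Pm: "P - 1\<^sub>m N \<in> carrier_mat N N" and Qm: "Q - 1\<^sub>m N \<in> carrier_mat N N" using c by auto
  have "(P - 1\<^sub>m N) * (Q - 1\<^sub>m N) = P * (Q - 1\<^sub>m N) - 1\<^sub>m N * (Q - 1\<^sub>m N)"
    using c(1) one_carrier_mat Qm by (rule minus_mult_distrib_mat)
  also have "P * (Q - 1\<^sub>m N) = P * Q - P * 1\<^sub>m N" using c(1,2) one_carrier_mat by (rule mult_minus_distrib_mat)
  finally have e: "(P - 1\<^sub>m N) * (Q - 1\<^sub>m N) = P * Q - P * 1\<^sub>m N - 1\<^sub>m N * (Q - 1\<^sub>m N)" .
  have eq: "P * Q - (1\<^sub>m N + (a + b)) = (P - 1\<^sub>m N) * (Q - 1\<^sub>m N) + (P - 1\<^sub>m N - a) + (Q - 1\<^sub>m N - b)"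
    unfolding e using c by (intro eq_matI) auto
  have "rs (P * Q - (1\<^sub>m N + (a + b))) \<le> rs ((P - 1\<^sub>m N) * (Q - 1\<^sub>m N) + (P - 1\<^sub>m N - a)) + rs (Q - 1\<^sub>m N - b)"
    unfolding eq using c by (intro rs_add) auto
  also have "\<dots> \<le> rs ((P - 1\<^sub>m N) * (Q - 1\<^sub>m N)) + rs (P - 1\<^sub>m N - a) + rs (Q - 1\<^sub>m N - b)"
    using c by (intro add_mono rs_add) auto
  also have "\<dots> \<le> rs (P - 1\<^sub>m N) * rs (Q - 1\<^sub>m N) + rs (P - 1\<^sub>m N - a) + rs (Q - 1\<^sub>m N - b)"
    using c by (intro add_mono rs_mult) auto
  finally show ?thesis .
qed

lemma exp_b1: "0 \<le> (x::real) \<Longrightarrow> exp x - 1 \<le> x * exp x"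
proof -
  assume x: "0 \<le> x"
  have "1 - x \<le> exp (-x)" using exp_ge_add_one_self[of "-x"] by simp
  hence "(1 - x) * exp x \<le> exp (-x) * exp x" by (intro mult_right_mono) auto
  thus ?thesis by (simp add: exp_minus field_simps)
qed

lemma exp_b2: "0 \<le> (x::real) \<Longrightarrow> exp x - 1 - x \<le> x^2 * exp x"
proof -
  assume x: "0 \<le> x"
  have "exp x - 1 - x \<le> x * (exp x - 1)" using exp_b1[OF x] by (simp add: algebra_simps)
  also have "\<dots> \<le> x * (x * exp x)" using exp_b1[OF x] x by (intro mult_left_mono) auto
  finally show ?thesis by (simp add: power2_eq_square)
qed

lemma mnorm_le: "mnorm M \<le> real (dim_row M) * rs M"
proof -
  let ?f = "\<lambda>i j. cmod (M $$ (i,j))"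
  define S where "S = (\<Sum>i<dim_row M. \<Sum>j<dim_col M. ?f i j)"
  have S0: "0 \<le> S" unfolding S_def by (intro sum_nonneg) auto
  have le: "?f i j \<le> S" if "i < dim_row M" "j < dim_col M" for i j
  proof -
    have "?f i j \<le> (\<Sum>j<dim_col M. ?f i j)" using that by (intro member_le_sum) auto
    also have "\<dots> \<le> S" unfolding S_def using that
      by (intro member_le_sum[where f="\<lambda>i. \<Sum>j<dim_col M. ?f i j"]) (auto intro: sum_nonneg)
    finally show ?thesis .
  qed
  have "(\<Sum>i<dim_row M. \<Sum>j<dim_col M. (?f i j)\<^sup>2) \<le> (\<Sum>i<dim_row M. \<Sum>j<dim_col M. ?f i j * S)"
    using le by (intro sum_mono) (auto simp: power2_eq_square intro!: mult_left_mono)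
  also have "\<dots> = S * S" unfolding S_def by (simp add: sum_distrib_right)
  finally have "mnorm M \<le> sqrt (S * S)" unfolding mnorm_def by (intro real_sqrt_le_mono)
  also have "\<dots> = S" using S0 by simp
  also have "S = (\<Sum>i<dim_row M. rowsum M i)" unfolding S_def rowsum_def ..
  also have "\<dots> \<le> (\<Sum>i<dim_row M. rs M)" by (intro sum_mono rowsum_le_rs) auto
  finally show ?thesis by simp
qed

lemma pow_comm: assumes "A \<in> carrier_mat n n" shows "A * A ^\<^sub>m m = A ^\<^sub>m m * A"
proof (induction m)
  case 0 then show ?case using assms by simp
next
  case (Suc m)
  have "A * A ^\<^sub>m Suc m = (A * A ^\<^sub>m m) * A" using assms by (simp add: assoc_mult_mat[symmetric, of _ n n _ n _ n])
  also have "\<dots> = A ^\<^sub>m Suc m * A" using Suc by simp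
  finally show ?case .
qed

lemma diag_left:
  fixes M :: "complex mat"
  assumes M: "M \<in> carrier_mat N K" and i: "i < N" and l: "l < K"
  shows "(mat N N (\<lambda>(i,j). if i = j then w i else 0) * M) $$ (i,l) = w i * M $$ (i,l)"
proof -
  have "(mat N N (\<lambda>(i,j). if i = j then w i else 0) * M) $$ (i,l) = (\<Sum>k<N. (if i = k then w i else 0) * M $$ (k,l))"
    using M i l by (auto simp: scalar_prod_def lessThan_atLeast0 intro!: sum.cong)
  also have "\<dots> = (\<Sum>k<N. if k = i then w i * M $$ (i,l) else 0)" by (intro sum.cong) auto
  also have "\<dots> = w i * M $$ (i,l)" using i by simp
  finally show ?thesis .
qed

lemma diag_right:
  fixes M :: "complex mat"
  assumes M: "M \<in> carrier_mat K N" and i: "i < K" and j: "j < N"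
  shows "(M * mat N N (\<lambda>(i,j). if i = j then w i else 0)) $$ (i,j) = M $$ (i,j) * w j"
proof -
  have "(M * mat N N (\<lambda>(i,j). if i = j then w i else 0)) $$ (i,j) = (\<Sum>k<N. M $$ (i,k) * (if k = j then w k else 0))"
    using M i j by (auto simp: scalar_prod_def lessThan_atLeast0 intro!: sum.cong)
  also have "\<dots> = (\<Sum>k<N. if k = j then M $$ (i,j) * w j else 0)" by (intro sum.cong) auto
  also have "\<dots> = M $$ (i,j) * w j" using j by simp
  finally show ?thesis .
qed

lemma diag_conj:
  fixes M :: "complex mat"
  assumes M: "M \<in> carrier_mat N N" and i: "i < N" and j: "j < N"
  shows "(mat N N (\<lambda>(i,j). if i = j then w i else 0) * M * mat N N (\<lambda>(i,j). if i = j then w i else 0)) $$ (i,j)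
     = w i * M $$ (i,j) * w j"
proof -
  have c: "mat N N (\<lambda>(i,j). if i = j then w i else 0) * M \<in> carrier_mat N N" using M by auto
  show ?thesis using diag_right[OF c i j, of w] diag_left[OF M i j, of w] by simp
qed

lemma rs_diag_conj:
  fixes M :: "complex mat"
  assumes M: "M \<in> carrier_mat N N" and w: "\<And>i. cmod (w i) = 1"
  shows "rs (mat N N (\<lambda>(i,j). if i = j then w i else 0) * M * mat N N (\<lambda>(i,j). if i = j then w i else 0)) \<le> rs M"
proof (rule rs_leI[OF rs_nonneg])
  fix i assume "i < dim_row (mat N N (\<lambda>(i,j). if i = j then w i else 0) * M * mat N N (\<lambda>(i,j). if i = j then w i else 0))"
  hence i: "i < N" by simp
  have "rowsum (mat N N (\<lambda>(i,j). if i = j then w i else 0) * M * mat N N (\<lambda>(i,j). if i = j then w i else 0)) i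
     = rowsum M i" unfolding rowsum_def
    apply (rule sum.cong)
     apply (use M in simp)
    apply (subst diag_conj[OF M i])
     apply (use M in \<open>auto simp: norm_mult w\<close>)
    done
  also have "\<dots> \<le> rs M" using i M by (intro rowsum_le_rs) auto
  finally show "rowsum (mat N N (\<lambda>(i,j). if i = j then w i else 0) * M * mat N N (\<lambda>(i,j). if i = j then w i else 0)) i \<le> rs M" .
qed

definition Dmat :: "nat \<Rightarrow> (nat \<Rightarrow> complex) \<Rightarrow> complex mat" where
  "Dmat N w = mat N N (\<lambda>(i,j). if i = j then w i else 0)"
definition Imat :: "nat \<Rightarrow> nat \<Rightarrow> complex mat" where
  "Imat N K = mat N K (\<lambda>(i,j). if i = j then 1 else 0)"
definition Umat :: "nat \<Rightarrow> nat \<Rightarrow> complex mat" where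
  "Umat d k = mat d d (\<lambda>(i,j). if i = j then (if i < k then 1 else -1) else 0)"
definition wfun :: "nat \<Rightarrow> nat \<Rightarrow> complex" where
  "wfun K x = (if x < K then 1 else -1)"

lemma kron_carrier: "A \<in> carrier_mat a b \<Longrightarrow> B \<in> carrier_mat c d \<Longrightarrow> kron A B \<in> carrier_mat (a*c) (b*d)"
  unfolding kron_def by auto

lemma div_mod_eq_iff: "(0::nat) < d \<Longrightarrow> (i div d = j div d \<and> i mod d = j mod d) \<longleftrightarrow> i = j"
  by (metis div_mult_mod_eq)

context
  fixes HA HB :: "complex mat" and dA dA' dB :: nat
  assumes HA: "HA \<in> carrier_mat dA dA" and HB: "HB \<in> carrier_mat dB dB" and dd: "dA' \<le> dA"
begin

lemma Hm_c: "kron HA HB \<in> carrier_mat (dA*dB) (dA*dB)"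
  using kron_carrier[OF HA HB] .

lemma Hp_c: "kron (compress dA' HA) HB \<in> carrier_mat (dA'*dB) (dA'*dB)"
  by (rule kron_carrier[OF _ HB]) (simp add: compress_def)

lemma Hp_entry: assumes i: "i < dA'*dB" and j: "j < dA'*dB"
  shows "kron (compress dA' HA) HB $$ (i,j) = kron HA HB $$ (i,j)"
proof -
  have dB: "0 < dB" using i by (cases dB) auto
  have id: "i div dB < dA'" "j div dB < dA'" using i j dB by (auto simp: div_less_iff_less_mult)
  have i2: "i < dA * dB" "j < dA * dB" using i j dd by (meson le_less_trans mult_le_mono1 not_le)+
  show ?thesis using HA HB id i j i2 dB dd unfolding kron_def compress_def by (simp add: compress_def)
qed

lemma W_eq: "kron (Umat dA dA') (1\<^sub>m dB) = Dmat (dA*dB) (wfun (dA'*dB))"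
proof (cases "dB = 0")
  case True then show ?thesis unfolding kron_def Dmat_def Umat_def by (intro eq_matI) auto
next
  case False
  hence dB: "0 < dB" by simp
  show ?thesis
  proof (intro eq_matI)
    fix i j assume "i < dim_row (Dmat (dA*dB) (wfun (dA'*dB)))" "j < dim_col (Dmat (dA*dB) (wfun (dA'*dB)))"
    hence i: "i < dA*dB" and j: "j < dA*dB" by (auto simp: Dmat_def)
    have id: "i div dB < dA" "j div dB < dA" using i j dB by (auto simp: div_less_iff_less_mult)
    have md: "i mod dB < dB" "j mod dB < dB" using dB by auto
    have e: "(i div dB < dA') = (i < dA' * dB)" using dB by (simp add: div_less_iff_less_mult)
    show "kron (Umat dA dA') (1\<^sub>m dB) $$ (i,j) = Dmat (dA*dB) (wfun (dA'*dB)) $$ (i,j)"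
      using i j id md e div_mod_eq_iff[OF dB, of i j] unfolding kron_def Dmat_def Umat_def wfun_def
      by (auto simp: HB)
  qed (auto simp: kron_def Dmat_def Umat_def)
qed

lemma V_eq: "kron (Imat dA dA') (1\<^sub>m dB) = Imat (dA*dB) (dA'*dB)"
proof (cases "dB = 0")
  case True then show ?thesis unfolding kron_def Imat_def by (intro eq_matI) auto
next
  case False
  hence dB: "0 < dB" by simp
  show ?thesis
  proof (intro eq_matI)
    fix i j assume "i < dim_row (Imat (dA*dB) (dA'*dB))" "j < dim_col (Imat (dA*dB) (dA'*dB))"
    hence i: "i < dA*dB" and j: "j < dA'*dB" by (auto simp: Imat_def)
    have id: "i div dB < dA" "j div dB < dA'" using i j dB by (auto simp: div_less_iff_less_mult)
    have md: "i mod dB < dB" "j mod dB < dB" using dB by auto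
    show "kron (Imat dA dA') (1\<^sub>m dB) $$ (i,j) = Imat (dA*dB) (dA'*dB) $$ (i,j)"
      using i j id md div_mod_eq_iff[OF dB, of i j] unfolding kron_def Imat_def
      by auto
  qed (auto simp: kron_def Imat_def)
qed

lemma ext_eq: "ext_ham dA dB 1 1 (kron HA HB) = kron HA HB"
proof (cases "dB = 0")
  case True then show ?thesis using Hm_c unfolding ext_ham_def by (intro eq_matI) auto
next
  case False
  hence dB: "0 < dB" by simp
  show ?thesis using Hm_c unfolding ext_ham_def by (intro eq_matI) (auto simp: Let_def)
qed

end

lemma Dmat_c[simp]: "Dmat N w \<in> carrier_mat N N" by (simp add: Dmat_def)

lemma trotter_step:
  fixes b :: "complex mat" and w :: "nat \<Rightarrow> complex" and N :: nat
  assumes w: "\<And>i. w i * w i = 1"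
  defines "W \<equiv> Dmat N w"
  defines "E \<equiv> mexp b"
  assumes b: "b \<in> carrier_mat N N"
  shows "rs ((W * E * W * E) ^\<^sub>m m - (1\<^sub>m N + (W * b * W + b)) ^\<^sub>m m)
     \<le> real m * exp (2 * rs b) ^ m * ((exp (rs b) - 1)^2 + 2 * (exp (rs b) - 1 - rs b))"
proof -
  let ?x = "rs b"
  have x0: "0 \<le> ?x" by (rule rs_nonneg)
  have wn: "cmod (w i) = 1" for i
  proof -
    have "cmod (w i) * cmod (w i) = 1" using w[of i] by (metis norm_mult norm_one)
    thus ?thesis by (metis abs_norm_cancel mult_cancel_right1 norm_ge_zero real_sqrt_abs2 real_sqrt_mult_self)
  qed
  have Wc: "W \<in> carrier_mat N N" unfolding W_def by simp
  have Ec: "E \<in> carrier_mat N N" unfolding E_def using b by simp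
  have Pc: "W * E * W \<in> carrier_mat N N" using Wc Ec by auto
  have ac: "W * b * W \<in> carrier_mat N N" using Wc b by auto
  have conj: "rs (W * M * W) \<le> rs M" if "M \<in> carrier_mat N N" for M
    unfolding W_def Dmat_def using that wn by (rule rs_diag_conj)
  have rE: "rs E \<le> exp ?x" unfolding E_def by (rule rs_mexp[OF b])
  have rY: "rs (W * E * W * E) \<le> exp (2 * ?x)"
  proof -
    have "rs (W * E * W * E) \<le> rs (W * E * W) * rs E" using Pc Ec by (intro rs_mult) auto
    also have "\<dots> \<le> exp ?x * exp ?x" using conj[OF Ec] rE
      by (intro mult_mono) (auto simp: rs_nonneg intro: order.trans)
    finally show ?thesis by (simp add: exp_add[symmetric])
  qed
  have rZ: "rs (1\<^sub>m N + (W * b * W + b)) \<le> exp (2 * ?x)"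
  proof -
    have "rs (1\<^sub>m N + (W * b * W + b)) \<le> rs (1\<^sub>m N) + rs (W * b * W + b)" using ac b by (intro rs_add) auto
    also have "\<dots> \<le> 1 + (?x + ?x)" using ac b conj[OF b]
      by (intro add_mono rs_one order.trans[OF rs_add]) auto
    also have "\<dots> \<le> exp (2 * ?x)" using exp_ge_add_one_self[of "2 * ?x"] by simp
    finally show ?thesis .
  qed
  have e1: "W * E * W - 1\<^sub>m N = W * (E - 1\<^sub>m N) * W"
  proof (rule eq_matI)
    fix i j assume "i < dim_row (W * (E - 1\<^sub>m N) * W)" "j < dim_col (W * (E - 1\<^sub>m N) * W)"
    hence ij: "i < N" "j < N" using Wc by auto
    have c2: "E - 1\<^sub>m N \<in> carrier_mat N N" using Ec by auto
    show "(W * E * W - 1\<^sub>m N) $$ (i,j) = (W * (E - 1\<^sub>m N) * W) $$ (i,j)"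
      using ij Ec c2 diag_conj[OF Ec ij, of w] diag_conj[OF c2 ij, of w] w[of i] unfolding W_def Dmat_def
      by (auto simp: algebra_simps)
  qed (use Wc Ec in auto)
  have e2: "W * E * W - 1\<^sub>m N - W * b * W = W * (E - 1\<^sub>m N - b) * W"
  proof (rule eq_matI)
    fix i j assume "i < dim_row (W * (E - 1\<^sub>m N - b) * W)" "j < dim_col (W * (E - 1\<^sub>m N - b) * W)"
    hence ij: "i < N" "j < N" using Wc by auto
    have c2: "E - 1\<^sub>m N - b \<in> carrier_mat N N" using Ec b by auto
    show "(W * E * W - 1\<^sub>m N - W * b * W) $$ (i,j) = (W * (E - 1\<^sub>m N - b) * W) $$ (i,j)"
      using ij Ec b c2 diag_conj[OF Ec ij, of w] diag_conj[OF c2 ij, of w] diag_conj[OF b ij, of w] w[of i]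
      unfolding W_def Dmat_def
      by (auto simp: algebra_simps)
  qed (use Wc Ec b in auto)
  have r1: "rs (E - 1\<^sub>m N) \<le> exp ?x - 1" unfolding E_def by (rule rs_mexp1[OF b])
  have r2: "rs (E - 1\<^sub>m N - b) \<le> exp ?x - 1 - ?x" unfolding E_def by (rule rs_mexp2[OF b])
  have rP1: "rs (W * E * W - 1\<^sub>m N) \<le> exp ?x - 1" unfolding e1 using Ec r1 by (intro order.trans[OF conj]) auto
  have rP2: "rs (W * E * W - 1\<^sub>m N - W * b * W) \<le> exp ?x - 1 - ?x" unfolding e2 using Ec b r2
    by (intro order.trans[OF conj]) auto
  have d: "rs (W * E * W * E - (1\<^sub>m N + (W * b * W + b))) \<le> (exp (rs b) - 1)^2 + 2 * (exp (rs b) - 1 - rs b)"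
  proof -
    have "rs (W * E * W * E - (1\<^sub>m N + (W * b * W + b)))
       \<le> rs (W * E * W - 1\<^sub>m N) * rs (E - 1\<^sub>m N) + rs (W * E * W - 1\<^sub>m N - W * b * W) + rs (E - 1\<^sub>m N - b)"
      by (rule prod_ident[OF Pc Ec ac b])
    also have "\<dots> \<le> (exp ?x - 1) * (exp ?x - 1) + (exp ?x - 1 - ?x) + (exp ?x - 1 - ?x)"
      using rP1 r1 rP2 r2 by (intro add_mono mult_mono) (auto simp: rs_nonneg intro: order.trans)
    finally show ?thesis by (simp add: power2_eq_square)
  qed
  have "rs ((W * E * W * E) ^\<^sub>m m - (1\<^sub>m N + (W * b * W + b)) ^\<^sub>m m)
     \<le> real m * exp (2 * ?x) ^ m * rs (W * E * W * E - (1\<^sub>m N + (W * b * W + b)))"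
    using Pc Ec ac b rY rZ x0 by (intro tele[of _ N]) auto
  also have "\<dots> \<le> real m * exp (2 * ?x) ^ m * ((exp (rs b) - 1)^2 + 2 * (exp (rs b) - 1 - rs b))"
    using d by (intro mult_left_mono) auto
  finally show ?thesis .
qed

lemma Imat_right: assumes X: "X \<in> carrier_mat N N" and K: "K \<le> N" and i: "i < N" and c: "c < K"
  shows "(X * Imat N K) $$ (i,c) = X $$ (i,c)"
proof -
  have "(X * Imat N K) $$ (i,c) = (\<Sum>l<N. X $$ (i,l) * (if l = c then 1 else 0))"
    using X i c by (auto simp: Imat_def scalar_prod_def lessThan_atLeast0 intro!: sum.cong)
  also have "\<dots> = (\<Sum>l<N. if l = c then X $$ (i,c) else 0)" by (intro sum.cong) auto
  also have "\<dots> = X $$ (i,c)" using c K by simp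
  finally show ?thesis .
qed

lemma Imat_left: assumes X: "X \<in> carrier_mat K L" and i: "i < N" and c: "c < L"
  shows "(Imat N K * X) $$ (i,c) = (if i < K then X $$ (i,c) else 0)"
proof -
  have "(Imat N K * X) $$ (i,c) = (\<Sum>l<K. (if i = l then 1 else 0) * X $$ (l,c))"
    using X i c by (auto simp: Imat_def scalar_prod_def lessThan_atLeast0 intro!: sum.cong)
  also have "\<dots> = (\<Sum>l<K. if l = i then X $$ (i,c) else 0)" by (intro sum.cong) auto
  also have "\<dots> = (if i < K then X $$ (i,c) else 0)" by simp
  finally show ?thesis .
qed

lemma Imat_c[simp]: "Imat N K \<in> carrier_mat N K" by (simp add: Imat_def)

lemma rs_Imat: "rs (Imat N K) \<le> 1"
proof (rule rs_leI)
  fix i assume i: "i < dim_row (Imat N K)"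
  have "rowsum (Imat N K) i = (\<Sum>j<K. if j = i then 1 else 0)"
    unfolding rowsum_def using i by (intro sum.cong) (auto simp: Imat_def)
  also have "\<dots> \<le> 1" by simp
  finally show "rowsum (Imat N K) i \<le> 1" .
qed simp

context
  fixes HA HB :: "complex mat" and dA dA' dB :: nat
  assumes HA: "HA \<in> carrier_mat dA dA" and HB: "HB \<in> carrier_mat dB dB" and dd: "dA' \<le> dA"
begin

lemma ZV:
  fixes T :: real and m :: nat
  assumes m: "0 < m"
  defines "b \<equiv> (- \<i> * of_real (T / (2 * real m))) \<cdot>\<^sub>m kron HA HB"
  defines "W \<equiv> Dmat (dA*dB) (wfun (dA'*dB))"
  defines "V \<equiv> Imat (dA*dB) (dA'*dB)"
  defines "A' \<equiv> (- \<i> * of_real T) \<cdot>\<^sub>m kron (compress dA' HA) HB"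
  shows "(1\<^sub>m (dA*dB) + (W * b * W + b)) * V = V * (1\<^sub>m (dA'*dB) + of_real (1 / real m) \<cdot>\<^sub>m A')"
proof -
  have Hc: "kron HA HB \<in> carrier_mat (dA*dB) (dA*dB)" by (rule Hm_c[OF HA HB dd])
  have Hpc: "kron (compress dA' HA) HB \<in> carrier_mat (dA'*dB) (dA'*dB)" by (rule Hp_c[OF HA HB dd])
  have NN: "dA'*dB \<le> dA*dB" using dd by simp
  have bc: "b \<in> carrier_mat (dA*dB) (dA*dB)" unfolding b_def using Hc by simp
  have Wc: "W \<in> carrier_mat (dA*dB) (dA*dB)" unfolding W_def by simp
  have Xc: "1\<^sub>m (dA*dB) + (W * b * W + b) \<in> carrier_mat (dA*dB) (dA*dB)" using bc Wc by auto
  have Yc: "1\<^sub>m (dA'*dB) + of_real (1 / real m) \<cdot>\<^sub>m A' \<in> carrier_mat (dA'*dB) (dA'*dB)"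
    unfolding A'_def using Hpc by auto
  show ?thesis
  proof (rule eq_matI)
    fix i c assume "i < dim_row (V * (1\<^sub>m (dA'*dB) + of_real (1 / real m) \<cdot>\<^sub>m A'))"
      "c < dim_col (V * (1\<^sub>m (dA'*dB) + of_real (1 / real m) \<cdot>\<^sub>m A'))"
    hence i: "i < dA*dB" and c: "c < dA'*dB" using Yc unfolding V_def by (auto simp: Imat_def)
    have c': "c < dA*dB" using c NN by linarith
    have wbw: "(W * b * W) $$ (i,c) = wfun (dA'*dB) i * b $$ (i,c) * wfun (dA'*dB) c"
      unfolding W_def Dmat_def by (rule diag_conj[OF bc i c'])
    have "((1\<^sub>m (dA*dB) + (W * b * W + b)) * V) $$ (i,c) = (1\<^sub>m (dA*dB) + (W * b * W + b)) $$ (i,c)"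
      unfolding V_def by (rule Imat_right[OF Xc NN i c])
    also have "\<dots> = (if i = c then 1 else 0) + ((W * b * W) $$ (i,c) + b $$ (i,c))"
      using i c' bc by (simp del: index_mult_mat)
    finally have lhs: "((1\<^sub>m (dA*dB) + (W * b * W + b)) * V) $$ (i,c)
       = (if i = c then 1 else 0) + (wfun (dA'*dB) i * b $$ (i,c) * wfun (dA'*dB) c + b $$ (i,c))"
      unfolding wbw .
    have rhs: "(V * (1\<^sub>m (dA'*dB) + of_real (1 / real m) \<cdot>\<^sub>m A')) $$ (i,c)
      = (if i < dA'*dB then (if i = c then 1 else 0) + of_real (1 / real m) * A' $$ (i,c) else 0)"
      unfolding V_def using Imat_left[OF Yc i c] c Hpc unfolding A'_def by auto
    show "((1\<^sub>m (dA*dB) + (W * b * W + b)) * V) $$ (i,c) = (V * (1\<^sub>m (dA'*dB) + of_real (1 / real m) \<cdot>\<^sub>m A')) $$ (i,c)"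
    proof (cases "i < dA'*dB")
      case True
      have "A' $$ (i,c) = (- \<i> * of_real T) * kron HA HB $$ (i,c)"
        unfolding A'_def using Hpc True c Hp_entry[OF HA HB dd True c] by simp
      moreover have "b $$ (i,c) = (- \<i> * of_real (T / (2 * real m))) * kron HA HB $$ (i,c)"
        unfolding b_def using Hc i c' by simp
      ultimately show ?thesis unfolding lhs rhs using True c m by (simp add: wfun_def field_simps)
    next
      case False
      then show ?thesis unfolding lhs rhs using c by (auto simp: wfun_def)
    qed
  qed (use Xc Yc bc Hpc in \<open>auto simp: V_def Imat_def A'_def\<close>)
qed

end

lemma proto:
  assumes W: "W \<in> carrier_mat N N" and E: "E \<in> carrier_mat N N"
    and kW: "kron UA UB = W" and eE: "evol Hx tau = E"
  shows "protocol_unitary Hx N (replicate (2*k) (tau, UA, UB)) = (W * E * W * E) ^\<^sub>m k"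
proof (induction k)
  case 0 then show ?case using W by simp
next
  case (Suc k)
  have Y: "W * E * W * E \<in> carrier_mat N N" using W E by auto
  have Yk: "(W * E * W * E) ^\<^sub>m k \<in> carrier_mat N N" using Y by simp
  have "protocol_unitary Hx N (replicate (2 * Suc k) (tau, UA, UB))
      = W * E * (W * E * (W * E * W * E) ^\<^sub>m k)"
    using Suc by (simp add: kW eE)
  also have "\<dots> = (W * E * W * E) * (W * E * W * E) ^\<^sub>m k"
    using W E Yk by (simp add: assoc_mult_mat[of _ N N _ N _ N])
  also have "\<dots> = (W * E * W * E) ^\<^sub>m Suc k" using pow_comm[OF Y] by simp
  finally show ?case .
qed

lemma unitary_Umat: "unitary_op d (Umat d k)"
proof -
  have adj: "adj (Umat d k) = Umat d k" unfolding adj_def Umat_def by (intro eq_matI) auto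
  have sq: "Umat d k * Umat d k = 1\<^sub>m d"
  proof (rule eq_matI)
    fix i j assume "i < dim_row (1\<^sub>m d)" "j < dim_col (1\<^sub>m d)"
    hence ij: "i < d" "j < d" by auto
    have e: "Umat d k = Dmat d (\<lambda>i. if i < k then 1 else -1)" unfolding Umat_def Dmat_def
      by (intro eq_matI) auto
    show "(Umat d k * Umat d k) $$ (i,j) = 1\<^sub>m d $$ (i,j)"
      unfolding e using diag_left[of "Dmat d (\<lambda>i. if i < k then 1 else -1)" d d i j "\<lambda>i. if i < k then 1 else -1"] ij
      unfolding Dmat_def by auto
  qed (auto simp: Umat_def)
  show ?thesis unfolding unitary_op_def adj sq by (simp add: Umat_def)
qed

lemma adj_one: "adj (1\<^sub>m d) = 1\<^sub>m d" unfolding adj_def by (intro eq_matI) auto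

lemma unitary_one: "unitary_op d (1\<^sub>m d)"
  unfolding unitary_op_def adj_one by simp

lemma isometry_one: "isometry_op d d (1\<^sub>m d)"
  unfolding isometry_op_def adj_one by simp

lemma isometry_Imat: assumes "k \<le> d" shows "isometry_op d k (Imat d k)"
proof -
  have adj: "adj (Imat d k) = Imat k d" unfolding adj_def Imat_def by (intro eq_matI) auto
  have "Imat k d * Imat d k = 1\<^sub>m k"
  proof (rule eq_matI)
    fix i j assume "i < dim_row (1\<^sub>m k)" "j < dim_col (1\<^sub>m k)"
    hence ij: "i < k" "j < k" by auto
    show "(Imat k d * Imat d k) $$ (i,j) = 1\<^sub>m k $$ (i,j)"
    proof -
      have "(Imat k d * Imat d k) $$ (i,j) = (if i < d then Imat d k $$ (i,j) else 0)"
        by (rule Imat_left) (use ij in auto)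
      thus ?thesis using ij assms by (simp add: Imat_def)
    qed
  qed (auto simp: Imat_def)
  thus ?thesis unfolding isometry_op_def adj by simp
qed

lemma E3: "3 * ((r::real) * y) * (Q * Q) = r * Q * (3 * (y * Q))" by (simp add: mult_ac)

lemma aux_eps: assumes "(n::real) \<ge> 0" "e > 0" shows "n * (2 * (e / (2 * (n + 1)))) \<le> e"
proof -
  have "n * (2 * (e / (2 * (n + 1)))) = e * (n / (n + 1))" using assms by (simp add: field_simps)
  also have "\<dots> \<le> e * 1" using assms by (intro mult_left_mono) auto
  finally show ?thesis by simp
qed

lemma add_2_3: "(q::real) + 2 * q = 3 * q" by simp

lemma scalar_bound:
  fixes x :: real and m :: nat
  assumes x: "0 \<le> x" and m: "0 < m"
  shows "real m * exp (2 * x) ^ m * ((exp x - 1)^2 + 2 * (exp x - 1 - x))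
     \<le> 3 * (real m * x)^2 * exp (4 * (real m * x)) / real m"
proof -
  let ?b = "real m * x"
  have xb: "x \<le> ?b" using x m by (simp add: mult_le_cancel_right1)
  have e1: "exp (2 * x) ^ m = exp (2 * ?b)"
  proof -
    have "exp (2 * x) ^ m = exp (real m * (2 * x))" by (rule exp_of_nat_mult[symmetric])
    also have "real m * (2 * x) = 2 * ?b" by simp
    finally show ?thesis .
  qed
  have ex: "exp x \<le> exp (2 * ?b)" using xb x by simp
  have "0 \<le> exp x - 1" using exp_ge_add_one_self[of x] x by linarith
  hence "(exp x - 1)^2 \<le> (x * exp x)^2"
    using exp_b1[OF x] by (rule power_mono[rotated])
  also have "\<dots> = x^2 * exp (2 * x)" by (simp only: power_mult_distrib exp_double)
  also have "\<dots> \<le> x^2 * exp (2 * ?b)"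
  proof (rule mult_left_mono)
    show "exp (2 * x) \<le> exp (2 * ?b)" using xb by simp
  qed simp
  finally have a1: "(exp x - 1)^2 \<le> x^2 * exp (2 * ?b)" .
  have "exp x - 1 - x \<le> x^2 * exp x" by (rule exp_b2[OF x])
  also have "\<dots> \<le> x^2 * exp (2 * ?b)" using ex by (rule mult_left_mono) simp
  finally have a2: "exp x - 1 - x \<le> x^2 * exp (2 * ?b)" .
  have "real m * exp (2 * x) ^ m * ((exp x - 1)^2 + 2 * (exp x - 1 - x))
      \<le> real m * exp (2 * ?b) * (3 * (x^2 * exp (2 * ?b)))"
  proof -
    have "(exp x - 1)^2 + 2 * (exp x - 1 - x) \<le> x^2 * exp (2 * ?b) + 2 * (x^2 * exp (2 * ?b))"
      by (rule add_mono[OF a1 mult_left_mono[OF a2]]) simp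
    also have "\<dots> = 3 * (x^2 * exp (2 * ?b))" by (rule add_2_3)
    finally have br: "(exp x - 1)^2 + 2 * (exp x - 1 - x) \<le> 3 * (x^2 * exp (2 * ?b))" .
    have "0 \<le> real m * exp (2 * ?b)" by simp
    from mult_left_mono[OF br this] show ?thesis unfolding e1 .
  qed
  also have "\<dots> = 3 * (real m * x)^2 * (exp (2 * ?b) * exp (2 * ?b)) / real m"
  proof -
    let ?Q = "exp (2 * ?b)"
    have h: "(real m * x)^2 / real m = real m * x^2" using m by (simp add: power2_eq_square)
    have "3 * (real m * x)^2 * (?Q * ?Q) / real m = 3 * ((real m * x)^2 / real m) * (?Q * ?Q)" by simp
    also have "\<dots> = 3 * (real m * x^2) * (?Q * ?Q)" by (simp only: h)
    also have "\<dots> = real m * ?Q * (3 * (x^2 * ?Q))" by (rule E3)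
    finally show ?thesis by (rule sym)
  qed
  also have "exp (2 * ?b) * exp (2 * ?b) = exp (4 * ?b)" unfolding exp_add[symmetric] by simp
  finally show ?thesis .
qed

theorem lemma1:
  fixes HA HB :: "complex mat" and dA dA' dB :: nat
  assumes "hermitian_op dA HA" and "hermitian_op dB HB"
    and "1 \<le> dA'" and "dA' \<le> dA"
  shows "sim_rate dA dB (kron HA HB) dA' dB (kron (compress dA' HA) HB) \<ge> 1"
proof -
  have HA: "HA \<in> carrier_mat dA dA" and HB: "HB \<in> carrier_mat dB dB"
    using assms(1,2) by (auto simp: hermitian_op_def)
  have dd: "dA' \<le> dA" by (rule assms(4))
  let ?H = "kron HA HB" and ?H' = "kron (compress dA' HA) HB"
  let ?N = "dA * dB" and ?N' = "dA' * dB"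
  have Hc: "?H \<in> carrier_mat ?N ?N" by (rule Hm_c[OF HA HB dd])
  have Hpc: "?H' \<in> carrier_mat ?N' ?N'" by (rule Hp_c[OF HA HB dd])
  have NN: "?N' \<le> ?N" using dd by simp
  have ach: "achievable_rate dA dB ?H dA' dB ?H' 1"
    unfolding achievable_rate_def
  proof (intro allI impI)
    fix T \<epsilon> :: real assume T: "T > 0" and eps: "\<epsilon> > 0"
    define A' where "A' = (- \<i> * of_real T) \<cdot>\<^sub>m ?H'"
    have A'c: "A' \<in> carrier_mat ?N' ?N'" unfolding A'_def using Hpc by simp
    define r' where "r' = rs A'"
    define \<beta> where "\<beta> = T * rs ?H / 2"
    define C where "C = 3 * \<beta>^2 * exp (4 * \<beta>)"
    define \<delta> where "\<delta> = \<epsilon> / (2 * (real ?N + 1))"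
    have pos: "0 < 2 * (real ?N + 1)" by (intro mult_pos_pos add_nonneg_pos) auto
    have \<delta>: "\<delta> > 0" unfolding \<delta>_def using eps pos by (rule divide_pos_pos)
    have ev1: "eventually (\<lambda>m. C / real m < \<delta>) sequentially"
      using order_tendstoD(2)[OF lim_const_over_n[of C] \<delta>] .
    have "(\<lambda>m. exp r' - (1 + r' / real m) ^ m) \<longlonglongrightarrow> exp r' - exp r'"
      by (intro tendsto_diff tendsto_const tendsto_exp_limit_sequentially)
    hence ev2: "eventually (\<lambda>m. exp r' - (1 + r' / real m) ^ m < \<delta>) sequentially"
      using order_tendstoD(2)[OF _ \<delta>] by simp
    have ev3: "eventually (\<lambda>m. (0::nat) < m) sequentially" by (rule eventually_gt_at_top)
    obtain m where m1: "C / real m < \<delta>" and m2: "exp r' - (1 + r' / real m) ^ m < \<delta>" and m: "0 < m"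
      using eventually_happens'[OF trivial_limit_sequentially, of "\<lambda>m. C / real m < \<delta> \<and> exp r' - (1 + r' / real m) ^ m < \<delta> \<and> 0 < m"]
        eventually_conj[OF ev1 eventually_conj[OF ev2 ev3]] by blast
    define \<tau> where "\<tau> = T / (2 * real m)"
    have \<tau>0: "0 \<le> \<tau>" unfolding \<tau>_def using T by simp
    define b where "b = (- \<i> * of_real \<tau>) \<cdot>\<^sub>m ?H"
    have bc: "b \<in> carrier_mat ?N ?N" unfolding b_def using Hc by simp
    define E where "E = mexp b"
    have Ec: "E \<in> carrier_mat ?N ?N" unfolding E_def using bc by simp
    define W where "W = Dmat ?N (wfun ?N')"
    have Wc: "W \<in> carrier_mat ?N ?N" unfolding W_def by simp
    define V where "V = Imat ?N ?N'"
    have Vc: "V \<in> carrier_mat ?N ?N'" unfolding V_def by simp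
    define Y where "Y = W * E * W * E"
    have Yc: "Y \<in> carrier_mat ?N ?N" unfolding Y_def using Wc Ec by auto
    define Z where "Z = 1\<^sub>m ?N + (W * b * W + b)"
    have Zc: "Z \<in> carrier_mat ?N ?N" unfolding Z_def using Wc bc by auto
    define Z' where "Z' = 1\<^sub>m ?N' + of_real (1 / real m) \<cdot>\<^sub>m A'"
    have Z'c: "Z' \<in> carrier_mat ?N' ?N'" unfolding Z'_def using A'c by auto
    define ps where "ps = replicate (2 * m) (\<tau>, Umat dA dA', 1\<^sub>m dB :: complex mat)"
    have ZV1: "Z * V = V * Z'" unfolding Z_def V_def Z'_def A'_def W_def b_def \<tau>_def
      by (rule ZV[OF HA HB dd m])
    have ZmV: "Z ^\<^sub>m k * V = V * Z' ^\<^sub>m k" for k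
    proof (induction k)
      case 0 then show ?case using Zc Vc Z'c by simp
    next
      case (Suc k)
      have "Z ^\<^sub>m Suc k * V = Z ^\<^sub>m k * (Z * V)" using Zc Vc by (simp add: assoc_mult_mat[of _ ?N ?N _ ?N _ ?N'])
      also have "\<dots> = (Z ^\<^sub>m k * V) * Z'" unfolding ZV1 using Zc Vc Z'c
        by (simp add: assoc_mult_mat[of _ ?N ?N _ ?N' _ ?N'])
      also have "\<dots> = V * Z' ^\<^sub>m Suc k" unfolding Suc using Zc Vc Z'c
        by (simp add: assoc_mult_mat[of _ ?N ?N' _ ?N' _ ?N'])
      finally show ?case .
    qed
    have prot: "protocol_unitary (ext_ham dA dB 1 1 ?H) (dA * 1 * (dB * 1)) ps = Y ^\<^sub>m m"
      unfolding ext_eq[OF HA HB dd] ps_def Y_def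
      by (simp, rule proto[OF Wc Ec]) (simp_all add: W_eq[OF HA HB dd] W_def E_def evol_def b_def)
    have kV: "kron (Imat dA dA') (1\<^sub>m dB) = V" unfolding V_def by (rule V_eq[OF HA HB dd])
    have eT: "evol ?H' T = mexp A'" unfolding evol_def A'_def ..
    define M where "M = Y ^\<^sub>m m * V - V * mexp A'"
    have Meq: "M = (Y ^\<^sub>m m - Z ^\<^sub>m m) * V - V * (mexp A' - Z' ^\<^sub>m m)"
    proof -
      have eAc: "mexp A' \<in> carrier_mat ?N' ?N'" using A'c by simp
      have Ymc: "Y ^\<^sub>m m \<in> carrier_mat ?N ?N" using Yc by simp
      have Zmc: "Z ^\<^sub>m m \<in> carrier_mat ?N ?N" using Zc by simp
      have Z'mc: "Z' ^\<^sub>m m \<in> carrier_mat ?N' ?N'" using Z'c by simp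
      have h1: "(Y ^\<^sub>m m - Z ^\<^sub>m m) * V = Y ^\<^sub>m m * V - Z ^\<^sub>m m * V"
        using Ymc Zmc Vc by (rule minus_mult_distrib_mat)
      have h2: "V * (mexp A' - Z' ^\<^sub>m m) = V * mexp A' - V * Z' ^\<^sub>m m"
        using Vc eAc Z'mc by (rule mult_minus_distrib_mat)
      show ?thesis unfolding M_def h1 h2 ZmV
        by (rule eq_matI) (use Ymc Vc eAc Z'mc in auto)
    qed
    have x: "rs b = \<tau> * rs ?H" unfolding b_def rs_smult using \<tau>0 by (simp add: norm_mult)
    have mx: "real m * rs b = \<beta>" unfolding x \<beta>_def \<tau>_def using m by simp
    have w1: "wfun ?N' i * wfun ?N' i = 1" for i by (simp add: wfun_def)
    have rM1: "rs (Y ^\<^sub>m m - Z ^\<^sub>m m) \<le> C / real m"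
    proof -
      have "rs (Y ^\<^sub>m m - Z ^\<^sub>m m) \<le> real m * exp (2 * rs b) ^ m * ((exp (rs b) - 1)^2 + 2 * (exp (rs b) - 1 - rs b))"
        unfolding Y_def Z_def W_def E_def by (rule trotter_step[OF w1 bc])
      also have "\<dots> \<le> 3 * (real m * rs b)^2 * exp (4 * (real m * rs b)) / real m"
        by (rule scalar_bound[OF rs_nonneg m])
      finally show ?thesis unfolding mx C_def .
    qed
    have rM2: "rs (mexp A' - Z' ^\<^sub>m m) \<le> exp r' - (1 + r' / real m) ^ m"
      unfolding Z'_def r'_def by (rule rs_mexp_binom[OF A'c m])
    have rV: "rs V \<le> 1" unfolding V_def by (rule rs_Imat)
    have rM: "rs M \<le> C / real m + (exp r' - (1 + r' / real m) ^ m)"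
    proof -
      have "rs M \<le> rs ((Y ^\<^sub>m m - Z ^\<^sub>m m) * V) + rs (V * (mexp A' - Z' ^\<^sub>m m))"
        unfolding Meq using Yc Zc Vc A'c Z'c by (intro rs_minus) auto
      also have "\<dots> \<le> rs (Y ^\<^sub>m m - Z ^\<^sub>m m) * rs V + rs V * rs (mexp A' - Z' ^\<^sub>m m)"
        using Yc Zc Vc A'c Z'c by (intro add_mono rs_mult) auto
      also have "\<dots> \<le> rs (Y ^\<^sub>m m - Z ^\<^sub>m m) * 1 + 1 * rs (mexp A' - Z' ^\<^sub>m m)"
        using rV by (intro add_mono mult_left_mono mult_right_mono rs_nonneg) auto
      finally show ?thesis using rM1 rM2 by simp
    qed
    have "mnorm M \<le> real (dim_row M) * rs M" by (rule mnorm_le)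
    also have "dim_row M = ?N" unfolding M_def using Yc Vc by simp
    also have "real ?N * rs M \<le> real ?N * (2 * \<delta>)" using rM m1 m2 by (intro mult_left_mono) auto
    also have "\<dots> \<le> \<epsilon>" unfolding \<delta>_def using eps by (intro aux_eps) auto
    finally have err: "mnorm M \<le> \<epsilon>" .
    have sumT: "sum_list (map fst ps) = T" unfolding ps_def \<tau>_def using m
      by (simp add: sum_list_replicate)
    show "\<exists>rA rB VA VB ps. 0 < rA \<and> 0 < rB \<and> isometry_op (dA * rA) dA' VA \<and> isometry_op (dB * rB) dB VB \<and>
          (\<forall>(tau, UA, UB)\<in>set ps. 0 \<le> tau \<and> unitary_op (dA * rA) UA \<and> unitary_op (dB * rB) UB) \<and>
          1 * sum_list (map fst ps) \<le> T \<and>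
          mnorm (protocol_unitary (ext_ham dA dB rA rB ?H) (dA * rA * (dB * rB)) ps * kron VA VB - kron VA VB * evol ?H' T) \<le> \<epsilon>"
      apply (rule exI[of _ 1], rule exI[of _ 1], rule exI[of _ "Imat dA dA'"], rule exI[of _ "1\<^sub>m dB"], rule exI[of _ ps])
      using isometry_Imat[OF dd] isometry_one[of dB] unitary_Umat[of dA dA'] unitary_one[of dB] \<tau>0 sumT err
      unfolding prot kV eT M_def[symmetric] by (auto simp: ps_def)
  qed
  have "ereal 1 \<in> {ereal \<gamma> | \<gamma>. \<gamma> \<ge> 0 \<and> achievable_rate dA dB ?H dA' dB ?H' \<gamma>}" using ach by auto
  hence "ereal 1 \<le> sim_rate dA dB ?H dA' dB ?H'" unfolding sim_rate_def by (rule Sup_upper)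
  thus ?thesis by (simp add: one_ereal_def)
qed

end
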